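(* Let $x,k,r$ be positive integers with $x>1$, and let $p$ be a prime, such that $x^3 + (x+1)^3 + \cdots + (x+k-1)^3 = p^{2r}$. If $k$ is even, then $2x+k-1 = p^t$ for some integer $t$ with $0<t<2r$. If $k$ is odd, then $2x+k-1 = 2p^t$ for some integer $t$ with $0<t<2r$. *)

theory Defs
  imports "HOL-Computational_Algebra.Primes"
begin

end

theory Submission
  imports Defs
begin

lemma sum_id: "8 * (\<Sum>i<Suc j. ((x::nat) + i) ^ 3) = (Suc j) * (2*x+j) * ((2*x+j)^2 + j^2 + 2*j)"
proof (induction j)
  case 0 then show ?case by (simp add: power3_eq_cube power2_eq_square)
next
  case (Suc j)
  have "8 * (\<Sum>i<Suc (Suc j). (x + i) ^ 3) = 8 * (\<Sum>i<Suc j. (x + i) ^ 3) + 8 * (x + Suc j)^3"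
    by simp
  also have "\<dots> = (Suc j) * (2*x+j) * ((2*x+j)^2 + j^2 + 2*j) + 8 * (x + Suc j)^3"
    using Suc by simp
  also have "\<dots> = Suc (Suc j) * (2 * x + Suc j) * ((2 * x + Suc j)\<^sup>2 + (Suc j)\<^sup>2 + 2 * Suc j)"
    by (simp add: power3_eq_cube power2_eq_square algebra_simps)
  finally show ?case .
qed

theorem mainTheorem3:
  fixes x k r p :: nat
  assumes "x > 1" and "k > 0" and "r > 0" and "prime p"
    and "(\<Sum>i<k. (x + i) ^ 3) = p ^ (2 * r)"
  shows "(even k \<longrightarrow> (\<exists>t::nat. 0 < t \<and> t < 2 * r \<and> 2 * x + k - 1 = p ^ t))
       \<and> (odd k \<longrightarrow> (\<exists>t::nat. 0 < t \<and> t < 2 * r \<and> 2 * x + k - 1 = 2 * p ^ t))"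
proof -
  obtain j where kj: "k = Suc j" using assms(2) gr0_implies_Suc by blast
  define N where "N = 2*x+j"
  have NN: "2 * x + k - 1 = N" using kj N_def by simp
  have E: "k * N * (N^2 + j^2 + 2*j) = 8 * p^(2*r)"
  proof -
    have "8 * (\<Sum>i<k. (x + i) ^ 3) = k * N * (N^2 + j^2 + 2*j)"
      unfolding kj N_def by (rule sum_id)
    then show ?thesis unfolding assms(5) by (rule sym)
  qed
  have N4: "N \<ge> 4" using assms(1) N_def by simp
  have p1: "p > 1" using assms(4) prime_gt_1_nat by blast
  have ex_t: "\<exists>t. 0 < t \<and> t < 2*r \<and> M = p^t" if hM: "M dvd p^(2*r)" "M \<ge> 2" "M < p^(2*r)" for M
  proof -
    obtain t where t: "t \<le> 2*r" "M = p^t"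
      using iffD1[OF divides_primepow_nat[OF assms(4)] hM(1)] by blast
    have "t \<noteq> 0"
    proof
      assume "t = 0" then have "M = 1" using t(2) by simp
      then show False using hM(2) by simp
    qed
    moreover have "t < 2*r" using t hM(3) power_less_imp_less_exp[OF p1] by metis
    ultimately show ?thesis using t(2) by blast
  qed
  show ?thesis
  proof (intro conjI impI)
    assume ek: "even k"
    then have oj: "odd j" using kj by simp
    then have oN: "odd N" using N_def by simp
    have "N dvd 8 * p^(2*r)" using E[symmetric] by (simp add: mult.assoc)
    moreover have "coprime N 8"
    proof -
      have "coprime N 2" using oN by simp
      then have "coprime N (2^3)" by (simp only: coprime_power_right_iff) simp
      moreover have "(2::nat)^3 = 8" by simp
      ultimately show ?thesis by metis
    qed
    ultimately have d: "N dvd p^(2*r)" using coprime_dvd_mult_right_iff by blast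
    have k2: "k \<ge> 2" using oj kj by (cases j) auto
    have "2 * N * N^2 \<le> k * N * (N^2 + j^2 + 2*j)"
      using k2 by (intro mult_mono) auto
    then have "2 * N * N^2 \<le> 8 * p^(2*r)" using E by simp
    moreover have "2 * N * 16 \<le> 2 * N * N^2"
    proof -
      have "16 \<le> N^2" using N4 power_mono[of 4 N 2] by simp
      then show ?thesis by simp
    qed
    ultimately have "N < p^(2*r)" using N4 by linarith
    then show "\<exists>t. 0 < t \<and> t < 2 * r \<and> 2 * x + k - 1 = p ^ t"
      using ex_t[OF d] N4 NN by auto
  next
    assume ok: "odd k"
    then have ej: "even j" using kj by simp
    then obtain b where jb: "j = 2*b" by blast
    define M where "M = x + b"
    have NM: "N = 2 * M" using N_def M_def jb by simp
    have M2: "M \<ge> 2" using assms(1) M_def by simp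
    have E2: "k * M * (4*M^2 + j^2 + 2*j) = 4 * p^(2*r)"
      using E NM by (simp add: power2_eq_square algebra_simps)
    have "M * (4 * M^2) \<le> (k * M) * (4*M^2 + j^2 + 2*j)"
      using assms(2) by (intro mult_mono) auto
    then have "4 * (M * M^2) \<le> 4 * p^(2*r)" using E2 by (simp add: algebra_simps)
    then have "M * M^2 \<le> p^(2*r)" by simp
    moreover have "M * 1 < M * M^2"
    proof -
      have "4 \<le> M^2" using M2 power_mono[of 2 M 2] by simp
      then show ?thesis using M2 by (intro mult_strict_left_mono) auto
    qed
    ultimately have Mlt: "M < p^(2*r)" by linarith
    have Md4: "M dvd 4 * p^(2*r)"
    proof -
      have "M dvd k * M * (4*M^2 + j^2 + 2*j)" by simp
      then show ?thesis unfolding E2 .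
    qed
    have "\<exists>t. M = p^t"
    proof (cases "p = 2")
      case True
      then have "M dvd p^(2*r+2)" using Md4 by (simp add: power_add mult.commute)
      then show ?thesis using iffD1[OF divides_primepow_nat[OF assms(4)]] by blast
    next
      case False
      have oM: "odd M"
      proof
        assume "even M"
        then obtain a where Ma: "M = 2*a" by blast
        have "even (b^2 + b)" by simp
        then obtain c where c: "b^2 + b = 2*c" by blast
        have eq8: "4*M^2 + j^2 + 2*j = 8 * (2*a^2 + c)"
          using Ma jb c by (simp add: power2_eq_square algebra_simps)
        have "k * M * (4*M^2 + j^2 + 2*j) = 16 * (k * a * (2*a^2 + c))"
          unfolding eq8 unfolding Ma by (simp add: algebra_simps)
        then have "16 dvd k * M * (4*M^2 + j^2 + 2*j)" by (metis dvd_triv_left)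
        then have "16 dvd 4 * p^(2*r)" unfolding E2 .
        then obtain q where "4 * p^(2*r) = 16 * q" by (elim dvdE)
        then have "p^(2*r) = 2 * (2 * q)" by simp
        then have "2 dvd p^(2*r)" by (metis dvd_triv_left)
        then have "2 dvd p" using prime_dvd_power_nat[of 2 p] by simp
        then show False using primes_dvd_imp_eq[OF two_is_prime_nat assms(4)] False by blast
      qed
      have "coprime M 4"
      proof -
        have "coprime M 2" using oM by simp
        then have "coprime M (2^2)" by (simp only: coprime_power_right_iff) simp
        moreover have "(2::nat)^2 = 4" by simp
        ultimately show ?thesis by metis
      qed
      then have "M dvd p^(2*r)" using Md4 coprime_dvd_mult_right_iff by blast
      then show ?thesis using iffD1[OF divides_primepow_nat[OF assms(4)]] by blast
    qed
    then obtain t where t: "M = p^t" by blast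
    have "t \<noteq> 0"
    proof
      assume "t = 0" then have "M = 1" using t by simp
      then show False using M2 by simp
    qed
    moreover have "t < 2*r" using t Mlt power_less_imp_less_exp[OF p1] by metis
    ultimately show "\<exists>t. 0 < t \<and> t < 2 * r \<and> 2 * x + k - 1 = 2 * p ^ t"
      using t NN NM by auto
  qed
qed

end
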